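(* For integers $n\ge 1$ and $0\le k\le n$, the number of ordered pairs $(P,Q)$ of $n$-step walks starting at the origin, each step being $(1,0)$ (E) or $(0,1)$ (N), whose vertex sets have exactly $k$ points in common other than the origin, is $2^k\binom{2n-k}{n}$.
   Context: An $n$-step walk starting at the origin is a sequence of lattice points $v_0=(0,0),v_1,\dots,v_n$ with $v_i-v_{i-1}\in\{(1,0),(0,1)\}$; its vertex set is $\{v_0,\dots,v_n\}$. The endpoints of the two walks are not required to coincide. *)

theory Defs
  imports Main
begin

text \<open>A walk of n steps is encoded by its list of steps; True = E = (1,0), False = N = (0,1).\<close>

definition walk_vertex :: "bool list \<Rightarrow> nat \<Rightarrow> int \<times> int" where
  "walk_vertex s i = (int (length (filter id (take i s))),
                      int (length (filter Not (take i s))))"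

definition walk_vertices :: "bool list \<Rightarrow> (int \<times> int) set" where
  "walk_vertices s = {walk_vertex s i | i. i \<le> length s}"

definition walks :: "nat \<Rightarrow> bool list set" where
  "walks n = {s. length s = n}"

end

theory Submission imports Defs begin

definition S :: "nat \<Rightarrow> nat \<Rightarrow> nat" where "S m d = (\<Sum>i<d. (2*m+1) choose (m+1+i))"
definition F :: "nat \<Rightarrow> nat \<Rightarrow> nat \<Rightarrow> nat" where
"F m d k = (if k = 0 then (if d = 0 then (2*m) choose m else S m d) else if m < k then 0
   else if d = 0 then 2^k * ((2*m-k) choose m) else 2^(k-1) * ((2*m+1-k) choose (m+d)))"

lemma pascal2: assumes i1: "i \<ge> 1"
  shows "(Suc (Suc j)) choose (Suc i) = (j choose (i - 1)) + 2 * (j choose i) + (j choose Suc i)"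
proof -
  obtain i' where i: "i = Suc i'" using i1 by (cases i) auto
  show ?thesis unfolding i by simp
qed

lemma symm_mid: "(2*m+1) choose m = (2*m+1) choose (m+1)"
  using binomial_symmetric[of m "2*m+1"] by simp

lemma S_rec: "D \<ge> 1 \<Longrightarrow> S (Suc m) D = 2 * S m D + S m (D+1) + S m (D-1)"
proof (induction D rule: dec_induct)
  case base
  have a: "2 * Suc m + 1 = Suc (Suc (2*m+1))" "Suc m + 1 + 0 = Suc (m+1)" by simp_all
  have "S (Suc m) 1 = Suc (Suc (2*m+1)) choose Suc (m+1)" unfolding S_def a by simp
  also have "\<dots> = ((2*m+1) choose m) + 2 * ((2*m+1) choose (m+1)) + ((2*m+1) choose Suc (m+1))"
    using pascal2[of "m+1" "2*m+1"] by simp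
  finally show ?case using symm_mid[of m] by (simp add: S_def del: binomial_Suc_Suc)
next
  case (step D)
  have e: "S m (Suc D) = S m D + ((2*m+1) choose (m+1+D))" for m D by (simp add: S_def)
  have a: "2 * Suc m + 1 = Suc (Suc (2*m+1))" "Suc m + 1 + D = Suc (m+1+D)" by simp_all
  have "(2*(Suc m)+1) choose (Suc m+1+D) = ((2*m+1) choose (m+D)) + 2 * ((2*m+1) choose (m+1+D)) + ((2*m+1) choose Suc (m+1+D))"
    unfolding a using pascal2[of "m+1+D" "2*m+1"] by simp
  moreover have "S m D = S m (D - 1) + ((2*m+1) choose (m+D))"
    using step(1) e[of m "D-1"] by simp
  ultimately show ?case using step e[of "Suc m" D] e[of m D] e[of m "Suc D"] by (simp add: algebra_simps del: binomial_Suc_Suc)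
qed

lemma F_pos: "1 \<le> k \<Longrightarrow> k \<le> m+1 \<Longrightarrow> d \<ge> 1 \<Longrightarrow> F m d k = 2^(k-1) * ((2*m+1-k) choose (m+d))"
  by (cases "k = m+1") (auto simp: F_def)

lemma F_H0: "1 \<le> k \<Longrightarrow> k \<le> m+1 \<Longrightarrow> F m 0 (k-1) = 2^(k-1) * ((2*m+1-k) choose m)"
  by (cases "k = 1") (auto simp: F_def)

lemma F_big: "m < k \<Longrightarrow> F m d k = 0"
  by (simp add: F_def)

lemma pow2: "1 \<le> k \<Longrightarrow> 2 * (2::nat)^(k-1) = 2^k"
  by (cases k) auto

lemma L0: "F (Suc m) 0 k = 2 * (if k = 0 then 0 else F m 0 (k-1)) + 2 * F m 1 k"
proof (cases "k = 0")
  case True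
  have a: "2 * Suc m = Suc (2*m+1)" by simp
  have "F (Suc m) 0 k = Suc (2*m+1) choose Suc m" using True a by (simp add: F_def del: binomial_Suc_Suc)
  also have "\<dots> = ((2*m+1) choose m) + ((2*m+1) choose Suc m)" by simp
  finally show ?thesis using True symm_mid[of m] by (simp add: F_def S_def del: binomial_Suc_Suc)
next
  case False
  show ?thesis
  proof (cases "k \<le> m+1")
    case True
    define j where "j = 2*m+1-k"
    have a: "2 * Suc m - k = Suc j" using True False unfolding j_def by simp
    have "F (Suc m) 0 k = 2^k * (Suc j choose Suc m)" using True False a by (simp add: F_def del: binomial_Suc_Suc)
    also have "\<dots> = 2^k * (j choose m) + 2^k * (j choose Suc m)" by (simp add: algebra_simps)
    also have "\<dots> = 2 * F m 0 (k-1) + 2 * F m 1 k"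
      using F_H0[of k m] F_pos[of k m 1] True False pow2[of k] unfolding j_def
      by (simp add: mult.assoc[symmetric] del: binomial_Suc_Suc)
    finally show ?thesis using False by simp
  next
    case f2: False
    then show ?thesis using False by (simp add: F_big)
  qed
qed

lemma L1: "D \<ge> 1 \<Longrightarrow> F (Suc m) D k = 2 * F m D k + F m (D+1) k +
   (if D = 1 then (if k = 0 then 0 else F m 0 (k-1)) else F m (D-1) k)"
proof (cases "k = 0")
  case True
  assume D: "D \<ge> 1"
  have "S m 0 = 0" by (simp add: S_def)
  then show ?thesis using True D S_rec[of D m] by (simp add: F_def)
next
  case False
  assume D: "D \<ge> 1"
  show ?thesis
  proof (cases "k \<le> m+1")
    case True
    define j where "j = 2*m+1-k"
    have a: "2 * Suc m + 1 - k = Suc (Suc j)" using True False unfolding j_def by simp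
    have t: "(if D = 1 then (if k = 0 then 0 else F m 0 (k-1)) else F m (D-1) k)
       = 2^(k-1) * (j choose (m+D-1))"
      using F_H0[of k m] F_pos[of k m "D-1"] True False D unfolding j_def by auto
    have "F (Suc m) D k = 2^(k-1) * (Suc (Suc j) choose Suc (m+D))"
      using True False a D by (simp add: F_pos del: binomial_Suc_Suc)
    also have "\<dots> = 2^(k-1) * ((j choose (m+D-1)) + 2 * (j choose (m+D)) + (j choose Suc (m+D)))"
      using pascal2[of "m+D" j] D by simp
    also have "\<dots> = 2 * F m D k + F m (D+1) k + 2^(k-1) * (j choose (m+D-1))"
      using F_pos[of k m D] F_pos[of k m "D+1"] True False D unfolding j_def
      by (simp add: algebra_simps del: binomial_Suc_Suc)
    finally show ?thesis using t by simp
  next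
    case f2: False
    then show ?thesis using False by (simp add: F_big)
  qed
qed


lemma S0: "D \<ge> 1 \<Longrightarrow> S 0 D = 1"
proof (induction D rule: dec_induct)
  case base then show ?case by (simp add: S_def)
next
  case (step D) then show ?case by (simp add: S_def)
qed

definition dl :: "bool \<Rightarrow> bool \<Rightarrow> int" where
  "dl p q = (if p then 1 else 0) - (if q then 1 else 0)"

fun zc :: "int \<Rightarrow> bool list \<Rightarrow> bool list \<Rightarrow> nat" where
  "zc d (p#P) (q#Q) = (if d + dl p q = 0 then 1 else 0) + zc (d + dl p q) P Q"
| "zc d _ _ = 0"

definition Aset :: "nat \<Rightarrow> int \<Rightarrow> nat \<Rightarrow> (bool list \<times> bool list) set" where
  "Aset m d k = {(P,Q). length P = m \<and> length Q = m \<and> zc d P Q = k}"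

definition Bset :: "nat \<Rightarrow> int \<Rightarrow> nat \<Rightarrow> (bool list \<times> bool list) set" where
  "Bset m e k = {(P,Q). length P = m \<and> length Q = m \<and> (if e = 0 then 1 else 0) + zc e P Q = k}"

definition cons2 :: "bool \<Rightarrow> bool \<Rightarrow> bool list \<times> bool list \<Rightarrow> bool list \<times> bool list" where
  "cons2 p q = (\<lambda>(P,Q). (p#P, q#Q))"

lemma fin_pairs: "finite {(P::bool list,Q::bool list). length P = m \<and> length Q = m}"
proof -
  have "{(P::bool list,Q::bool list). length P = m \<and> length Q = m} = {P. length P = m} \<times> {Q. length Q = m}" by auto
  then show ?thesis using finite_lists_length_eq[of "UNIV::bool set"] by simp
qed

lemma fin_B: "finite (Bset m e k)"
  by (rule finite_subset[OF _ fin_pairs[of m]]) (auto simp: Bset_def)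

lemma card_B: "card (Bset m e k) = (if e = 0 then (if k = 0 then 0 else card (Aset m e (k-1))) else card (Aset m e k))"
proof -
  have "Bset m e k = (if e = 0 then (if k = 0 then {} else Aset m e (k-1)) else Aset m e k)"
    by (auto simp: Bset_def Aset_def)
  then show ?thesis by simp
qed

lemma inj_cons2: "inj (cons2 p q)"
  by (auto simp: inj_def cons2_def)

lemma card_img: "card (cons2 p q ` Bset m e k) = card (Bset m e k)"
  using card_image[OF inj_on_subset[OF inj_cons2 subset_UNIV]] by blast

lemma A_Suc: "Aset (Suc m) d k = cons2 True True ` Bset m d k \<union> cons2 False False ` Bset m d k
   \<union> cons2 True False ` Bset m (d+1) k \<union> cons2 False True ` Bset m (d-1) k" (is "_ = ?R")
proof
  show "Aset (Suc m) d k \<subseteq> ?R"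
  proof
    fix x assume x: "x \<in> Aset (Suc m) d k"
    obtain P Q where xpq: "x = (P,Q)" by (cases x)
    obtain p P' where P: "P = p # P'" "length P' = m" using x xpq by (auto simp: Aset_def length_Suc_conv)
    obtain q Q' where Q: "Q = q # Q'" "length Q' = m" using x xpq by (auto simp: Aset_def length_Suc_conv)
    have z: "(if d + dl p q = 0 then 1 else 0) + zc (d + dl p q) P' Q' = k"
      using x xpq P Q by (simp add: Aset_def)
    have xx: "x = cons2 p q (P', Q')" using xpq P Q by (simp add: cons2_def)
    show "x \<in> ?R"
      using z P(2) Q(2) unfolding xx by (cases p; cases q) (auto simp: Bset_def dl_def)
  qed
next
  show "?R \<subseteq> Aset (Suc m) d k"
    by (auto simp: Aset_def Bset_def cons2_def dl_def)
qed

lemma card_A_Suc: "card (Aset (Suc m) d k) = 2 * card (Bset m d k) + card (Bset m (d+1) k) + card (Bset m (d-1) k)"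
proof -
  have fi: "finite (cons2 p q ` Bset m e k)" for p q e using fin_B by simp
  have dj: "p \<noteq> p' \<or> q \<noteq> q' \<Longrightarrow> cons2 p q ` X \<inter> cons2 p' q' ` Y = {}" for p q p' q' X Y
    by (auto simp: cons2_def)
  show ?thesis unfolding A_Suc
    apply (subst card_Un_disjoint, simp add: fi, simp add: fi, use dj in blast)+
    apply (simp add: card_img)
    done
qed

lemma card_A: "card (Aset m d k) = F m (nat \<bar>d\<bar>) k"
proof (induction m arbitrary: d k)
  case 0
  have "Aset 0 d k = (if k = 0 then {([],[])} else {})" by (auto simp: Aset_def)
  then show ?case using S0[of "nat \<bar>d\<bar>"] by (simp add: F_def)
next
  case (Suc m)
  define H0 where "H0 = (if k = 0 then 0 else F m 0 (k-1))"
  have cB: "card (Bset m e k) = (if e = 0 then H0 else F m (nat \<bar>e\<bar>) k)" for e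
    using Suc by (simp add: card_B H0_def)
  have main: "card (Aset (Suc m) d k) = 2 * (if d = 0 then H0 else F m (nat \<bar>d\<bar>) k)
     + (if d + 1 = 0 then H0 else F m (nat \<bar>d+1\<bar>) k) + (if d - 1 = 0 then H0 else F m (nat \<bar>d-1\<bar>) k)"
    by (simp add: card_A_Suc cB)
  consider "d = 0" | "d > 0" | "d < 0" by linarith
  then show ?case
  proof cases
    case 1 then show ?thesis using main L0[of m k] by (simp add: H0_def)
  next
    case 2
    define D where "D = nat d"
    have D1: "D \<ge> 1" "d = int D" using 2 by (auto simp: D_def)
    have e1: "nat \<bar>d+1\<bar> = D + 1" "D \<noteq> 1 \<Longrightarrow> nat \<bar>d-1\<bar> = D - 1" using D1 by auto
    show ?thesis using main L1[of D m k] D1 e1 by (cases "D = 1") (simp_all add: H0_def numeral_eq_Suc)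
  next
    case 3
    define D where "D = nat (-d)"
    have D1: "D \<ge> 1" "d = - int D" using 3 by (auto simp: D_def)
    have e1: "nat \<bar>d-1\<bar> = D + 1" "D \<noteq> 1 \<Longrightarrow> nat \<bar>d+1\<bar> = D - 1" using D1 by auto
    show ?thesis using main L1[of D m k] D1 e1 by (cases "D = 1") (simp_all add: H0_def numeral_eq_Suc)
  qed
qed


definition EE :: "bool list \<Rightarrow> int" where "EE l = int (length (filter id l))"

lemma card_filter_upt: "card {i \<in> {1..n}. R i} = length (filter R [1..<Suc n])"
proof -
  have "{i \<in> {1..n}. R i} = set (filter R [1..<Suc n])" by auto
  then show ?thesis using distinct_card[of "filter R [1..<Suc n]"] by simp
qed

lemma zc_card: "length P = length Q \<Longrightarrow>
  zc d P Q = card {i \<in> {1..length P}. d + EE (take i P) - EE (take i Q) = 0}"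
proof (induction P arbitrary: Q d)
  case Nil then show ?case by simp
next
  case (Cons p P)
  obtain q Q' where Q: "Q = q # Q'" "length Q' = length P" using Cons.prems by (cases Q) auto
  have u: "[1..<Suc (Suc n)] = 1 # map Suc [1..<Suc n]" for n
    by (simp add: upt_conv_Cons map_Suc_upt del: upt_Suc)
  have e: "d + EE (take (Suc i) (p # P)) - EE (take (Suc i) (q # Q')) =
      (d + dl p q) + EE (take i P) - EE (take i Q')" for i
    by (simp add: EE_def dl_def)
  have "zc d (p#P) Q = (if d + dl p q = 0 then 1 else 0) + zc (d + dl p q) P Q'" using Q by simp
  also have "zc (d + dl p q) P Q' = length (filter (\<lambda>i. d + dl p q + EE (take i P) - EE (take i Q') = 0) [1..<Suc (length P)])"
    using Cons.IH[OF Q(2)[symmetric], of "d + dl p q"] card_filter_upt by simp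
  also have "\<dots> = length (filter (\<lambda>i. d + EE (take i (p#P)) - EE (take i Q) = 0) (map Suc [1..<Suc (length P)]))"
    unfolding Q(1) filter_map length_map o_def e ..
  finally have calc: "zc d (p#P) Q = (if d + dl p q = 0 then 1 else 0) + length (filter (\<lambda>i. d + EE (take i (p#P)) - EE (take i Q) = 0) (map Suc [1..<Suc (length P)]))" .
  have r1: "(d + EE (take 1 (p#P)) - EE (take 1 Q) = 0) = (d + dl p q = 0)" by (simp add: Q EE_def dl_def)
  have fc: "length (filter R (1 # xs)) = (if R 1 then 1 else 0) + length (filter R xs)" for R :: "nat \<Rightarrow> bool" and xs by simp
  show ?case unfolding card_filter_upt length_Cons u fc r1 calc ..
qed


lemma wv_mem: "i \<le> length s \<Longrightarrow> walk_vertex s i \<in> walk_vertices s"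
  unfolding walk_vertices_def by blast

lemma wv_sum: "i \<le> length s \<Longrightarrow> fst (walk_vertex s i) + snd (walk_vertex s i) = int i"
proof -
  assume i: "i \<le> length s"
  have "length (filter id (take i s)) + length (filter (\<lambda>x. \<not> id x) (take i s)) = length (take i s)"
    by (rule sum_length_filter_compl)
  then show ?thesis using i by (simp add: walk_vertex_def)
qed

lemma wv_inj: "i \<le> length s \<Longrightarrow> j \<le> length s \<Longrightarrow> walk_vertex s i = walk_vertex s' j \<Longrightarrow> j \<le> length s' \<Longrightarrow> i = j"
proof -
  assume a: "i \<le> length s" "j \<le> length s" "walk_vertex s i = walk_vertex s' j" "j \<le> length s'"
  have "int i = int j" using wv_sum[OF a(1)] wv_sum[OF a(4)] a(3) by simp
  then show "i = j" by simp
qed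

lemma wv_nz: "i \<le> length s \<Longrightarrow> (walk_vertex s i = (0,0)) = (i = 0)"
proof -
  assume a: "i \<le> length s"
  have "i = 0 \<Longrightarrow> walk_vertex s i = (0,0)" by (simp add: walk_vertex_def)
  moreover have "walk_vertex s i = (0,0) \<Longrightarrow> i = 0" using wv_sum[OF a] by simp
  ultimately show ?thesis by blast
qed

lemma wv_eq: "i \<le> length P \<Longrightarrow> i \<le> length Q \<Longrightarrow>
   (walk_vertex P i = walk_vertex Q i) = (EE (take i P) = EE (take i Q))"
proof -
  assume a: "i \<le> length P" "i \<le> length Q"
  have "fst (walk_vertex P i) = EE (take i P)" "fst (walk_vertex Q i) = EE (take i Q)"
    by (simp_all add: walk_vertex_def EE_def)
  then show ?thesis using wv_sum[OF a(1)] wv_sum[OF a(2)] by (auto simp: prod_eq_iff)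
qed

lemma vert_card: assumes "length P = n" "length Q = n"
  shows "card (walk_vertices P \<inter> walk_vertices Q - {(0, 0)}) = zc 0 P Q"
proof -
  define I where "I = {i \<in> {1..n}. 0 + EE (take i P) - EE (take i Q) = 0}"
  have sub1: "walk_vertices P \<inter> walk_vertices Q - {(0, 0)} \<subseteq> walk_vertex P ` I"
  proof
    fix x assume x: "x \<in> walk_vertices P \<inter> walk_vertices Q - {(0, 0)}"
    have xP: "x \<in> {walk_vertex P i | i. i \<le> length P}" using x unfolding walk_vertices_def by simp
    have xQ: "x \<in> {walk_vertex Q i | i. i \<le> length Q}" using x unfolding walk_vertices_def by simp
    have x0: "x \<noteq> (0,0)" using x by simp
    obtain i where i1: "x = walk_vertex P i" "i \<le> length P" using xP by blast
    obtain j where j1: "x = walk_vertex Q j" "j \<le> length Q" using xQ by blast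
    have e: "walk_vertex P i = walk_vertex Q j" using i1(1) j1(1) by simp
    have ji: "i = j" using wv_inj[OF _ _ e j1(2)] i1(2) j1(2) assms by simp
    have ii: "i \<le> n" "i \<le> length Q" using i1(2) assms by simp_all
    have "i \<noteq> 0"
    proof
      assume "i = 0"
      then have "walk_vertex P i = (0,0)" by (simp add: walk_vertex_def)
      then show False using x0 i1(1) by simp
    qed
    moreover have "EE (take i P) = EE (take i Q)" using wv_eq[OF i1(2) ii(2)] e ji by simp
    ultimately have "i \<in> I" using ii unfolding I_def by simp
    then show "x \<in> walk_vertex P ` I" using i1(1) by blast
  qed
  have sub2: "walk_vertex P ` I \<subseteq> walk_vertices P \<inter> walk_vertices Q - {(0, 0)}"
  proof (rule image_subsetI)
    fix i assume "i \<in> I"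
    then have i: "1 \<le> i" "i \<le> n" "EE (take i P) = EE (take i Q)" unfolding I_def by auto
    have eq: "walk_vertex P i = walk_vertex Q i" using wv_eq[of i P Q] i(2,3) assms by simp
    have nz: "walk_vertex P i \<noteq> (0,0)" using wv_nz[of i P] i assms by simp
    have p: "walk_vertex P i \<in> walk_vertices P" using wv_mem[of i P] i(2) assms by simp
    have q: "walk_vertex Q i \<in> walk_vertices Q" using wv_mem[of i Q] i(2) assms by simp
    show "walk_vertex P i \<in> walk_vertices P \<inter> walk_vertices Q - {(0, 0)}"
      using p q nz eq by simp
  qed
  have inj: "inj_on (walk_vertex P) I"
  proof (rule inj_onI)
    fix i j assume "i \<in> I" "j \<in> I" "walk_vertex P i = walk_vertex P j"
    then show "i = j" using wv_inj[of i P j P] assms unfolding I_def by simp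
  qed
  have "card (walk_vertices P \<inter> walk_vertices Q - {(0, 0)}) = card (walk_vertex P ` I)"
    using sub1 sub2 by (simp add: subset_antisym)
  also have "\<dots> = card I" using inj by (rule card_image)
  also have "\<dots> = zc 0 P Q" using zc_card[of P Q 0] assms unfolding I_def by simp
  finally show ?thesis .
qed

theorem theorem3:
  fixes n k :: nat
  assumes "n \<ge> 1" and "k \<le> n"
  shows "card {(P, Q). P \<in> walks n \<and> Q \<in> walks n \<and>
            card (walk_vertices P \<inter> walk_vertices Q - {(0, 0)}) = k}
         = 2 ^ k * ((2 * n - k) choose n)"
proof -
  have eq: "(P \<in> walks n \<and> Q \<in> walks n \<and>
            card (walk_vertices P \<inter> walk_vertices Q - {(0, 0)}) = k) = ((P,Q) \<in> Aset n 0 k)" for P Q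
  proof (cases "length P = n \<and> length Q = n")
    case True
    then show ?thesis using vert_card[of P n Q] by (simp add: walks_def Aset_def)
  next
    case False
    then show ?thesis by (auto simp: walks_def Aset_def)
  qed
  have "{(P, Q). P \<in> walks n \<and> Q \<in> walks n \<and>
            card (walk_vertices P \<inter> walk_vertices Q - {(0, 0)}) = k} = Aset n 0 k"
    using eq by auto
  then show ?thesis using card_A[of n 0 k] assms by (simp add: F_def)
qed

end
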